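(* Let $\phi:\mathbb{N}_0\to\mathbb{N}_0$ satisfy $\phi(0)=0$ and $\phi(x)\neq x$ for all $x\in\mathbb{N}$, let $k,n\ge1$, and assume the local function $\phi_n$ has no cycle. Let $p_\nu=|\{x\in D_n:h(x)=\nu\}|$ for $1\le\nu\le n$, $m=\max\{\nu\in\{1,\dots,n\}:p_\nu\ge1\}$ and $\pi=(p_1,\dots,p_m)$. Then $\pi$ is an ordered partition (composition) of $n$ of length $m$ with $1\le m\le n$ and $p_1,\dots,p_m\ge1$. Moreover, with $J_{n,k}(\phi)=\{x\in D_n:\phi_n^k(x)\in D_n\}$, \[ |J_{n,k}(\phi)|=n-\sum_{\nu=1}^k p_\nu\quad(1\le k\le m), \] and $|J_{n,k}(\phi)|=0$ for $k\ge m$.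
   Context: $\mathbb{N}=\{1,2,\dots\}$, $\mathbb{N}_0=\mathbb{N}\cup\{0\}$, $D_n=\{1,\dots,n\}$, $D_{n,0}=D_n\cup\{0\}$. The local function $\phi_n:D_{n,0}\to D_{n,0}$ is $\phi_n(x)=\phi(x)$ if $x\in D_n$ and $\phi(x)\in D_n$, and $\phi_n(x)=0$ otherwise. "$\phi_n$ has no cycle" means there are no $m\ge2$ and $x\in D_n$ with $\phi_n^m(x)=x$. The height of $x\in D_n$ is $h(x)=\min\{k\in\mathbb{N}:\phi_n^k(x)=0\}$. *)

theory Defs
  imports Main
begin

definition loc :: "(nat \<Rightarrow> nat) \<Rightarrow> nat \<Rightarrow> nat \<Rightarrow> nat" where
  "loc \<phi> n x = (if x \<in> {1..n} \<and> \<phi> x \<in> {1..n} then \<phi> x else 0)"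

definition no_cycle :: "(nat \<Rightarrow> nat) \<Rightarrow> nat \<Rightarrow> bool" where
  "no_cycle \<phi> n \<longleftrightarrow> \<not> (\<exists>m\<ge>2. \<exists>x\<in>{1..n}. (loc \<phi> n ^^ m) x = x)"

definition height :: "(nat \<Rightarrow> nat) \<Rightarrow> nat \<Rightarrow> nat \<Rightarrow> nat" where
  "height \<phi> n x = (LEAST k. k \<ge> 1 \<and> (loc \<phi> n ^^ k) x = 0)"

definition J :: "(nat \<Rightarrow> nat) \<Rightarrow> nat \<Rightarrow> nat \<Rightarrow> nat set" where
  "J \<phi> n k = {x \<in> {1..n}. (loc \<phi> n ^^ k) x \<in> {1..n}}"

definition is_composition :: "nat \<Rightarrow> nat list \<Rightarrow> bool" where
  "is_composition n ps \<longleftrightarrow> (\<forall>p\<in>set ps. p \<ge> 1) \<and> sum_list ps = n"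

end

theory Submission
  imports Defs
begin

lemma loc_le: "loc \<phi> n y \<le> n"
  unfolding loc_def by auto

lemma loc_zero: "loc \<phi> n 0 = 0"
  unfolding loc_def by auto

lemma funpow_loc_zero: "(loc \<phi> n ^^ k) 0 = 0"
  by (induction k) (auto simp: loc_zero)

lemma funpow_loc_le: "k \<ge> 1 \<Longrightarrow> (loc \<phi> n ^^ k) y \<le> n"
  by (cases k) (auto simp: loc_le)

lemma no_ret:
  assumes "\<forall>x\<ge>1. \<phi> x \<noteq> x" "no_cycle \<phi> n" "y \<in> {1..n}" "j \<ge> 1"
  shows "(loc \<phi> n ^^ j) y \<noteq> y"
proof (cases "j = 1")
  case True
  then show ?thesis using assms(1,3) by (auto simp: loc_def)
next
  case False
  then show ?thesis using assms(2,3,4) unfolding no_cycle_def by auto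
qed

lemma reaches_zero:
  assumes "\<forall>x\<ge>1. \<phi> x \<noteq> x" "no_cycle \<phi> n" "x \<in> {1..n}"
  shows "\<exists>k. k \<ge> 1 \<and> k \<le> n \<and> (loc \<phi> n ^^ k) x = 0"
proof (rule ccontr)
  assume H: "\<not> ?thesis"
  let ?f = "\<lambda>i. (loc \<phi> n ^^ i) x"
  have img: "?f ` {0..n} \<subseteq> {1..n}"
  proof
    fix z assume "z \<in> ?f ` {0..n}"
    then obtain i where i: "i \<in> {0..n}" "z = ?f i" by auto
    show "z \<in> {1..n}"
    proof (cases "i = 0")
      case True then show ?thesis using i assms(3) by simp
    next
      case False
      then have "?f i \<noteq> 0" using H i by auto
      moreover have "?f i \<le> n" using False funpow_loc_le[of i] by simp
      ultimately show ?thesis using i by auto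
    qed
  qed
  have "\<not> inj_on ?f {0..n}"
  proof
    assume "inj_on ?f {0..n}"
    then have "card (?f ` {0..n}) = n + 1" by (simp add: card_image)
    moreover have "card (?f ` {0..n}) \<le> n" using card_mono[OF _ img] by simp
    ultimately show False by simp
  qed
  then obtain i j where ij: "i \<in> {0..n}" "j \<in> {0..n}" "i < j" "?f i = ?f j"
    unfolding inj_on_def by (metis linorder_neqE_nat)
  have "(loc \<phi> n ^^ (j - i)) (?f i) = ?f j"
    using ij(3) by (metis funpow_add le_add_diff_inverse2 less_imp_le o_apply)
  moreover have "?f i \<in> {1..n}" using img ij(1) by blast
  moreover have "j - i \<ge> 1" using ij(3) by simp
  moreover have "(loc \<phi> n ^^ (j - i)) (?f i) = ?f i" using calculation(1) ij(4) by simp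
  ultimately show False using no_ret[OF assms(1,2), of "?f i" "j - i"] by blast
qed

lemma height_char:
  assumes "\<forall>x\<ge>1. \<phi> x \<noteq> x" "no_cycle \<phi> n" "y \<in> {1..n}"
  shows "height \<phi> n y \<ge> 1" "height \<phi> n y \<le> n"
    "\<And>k. (loc \<phi> n ^^ k) y = 0 \<longleftrightarrow> height \<phi> n y \<le> k"
proof -
  obtain k0 where k0: "k0 \<ge> 1" "k0 \<le> n" "(loc \<phi> n ^^ k0) y = 0"
    using reaches_zero[OF assms] by auto
  let ?h = "height \<phi> n y"
  have P: "?h \<ge> 1 \<and> (loc \<phi> n ^^ ?h) y = 0"
    unfolding height_def by (rule LeastI[of _ k0]) (use k0 in auto)
  have le: "?h \<le> k0"
    unfolding height_def by (rule Least_le) (use k0 in auto)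
  show "?h \<ge> 1" using P by simp
  show "?h \<le> n" using le k0 by simp
  fix k
  show "(loc \<phi> n ^^ k) y = 0 \<longleftrightarrow> ?h \<le> k"
  proof
    assume a: "(loc \<phi> n ^^ k) y = 0"
    show "?h \<le> k"
    proof (cases "k = 0")
      case True then show ?thesis using a assms(3) by simp
    next
      case False
      then show ?thesis unfolding height_def by (intro Least_le) (use a in auto)
    qed
  next
    assume a: "?h \<le> k"
    have "(loc \<phi> n ^^ k) y = (loc \<phi> n ^^ (k - ?h)) ((loc \<phi> n ^^ ?h) y)"
      using a by (metis funpow_add le_add_diff_inverse2 o_apply)
    then show "(loc \<phi> n ^^ k) y = 0" using P funpow_loc_zero by simp
  qed
qed

lemma thr_unique:
  assumes "\<And>k. P k \<longleftrightarrow> (a::nat) \<le> k" "\<And>k. P k \<longleftrightarrow> b \<le> k"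
  shows "a = b"
  using assms by (metis le_antisym order_refl)

lemma height_iter:
  assumes "\<forall>x\<ge>1. \<phi> x \<noteq> x" "no_cycle \<phi> n" "x \<in> {1..n}" "j < height \<phi> n x"
  shows "(loc \<phi> n ^^ j) x \<in> {1..n} \<and> height \<phi> n ((loc \<phi> n ^^ j) x) = height \<phi> n x - j"
proof -
  let ?y = "(loc \<phi> n ^^ j) x"
  have nz: "?y \<noteq> 0" using height_char(3)[OF assms(1-3), of j] assms(4) by simp
  have yin: "?y \<in> {1..n}"
  proof (cases "j = 0")
    case True then show ?thesis using assms(3) by simp
  next
    case False then show ?thesis using nz funpow_loc_le[of j] by auto
  qed
  have it: "\<And>k. (loc \<phi> n ^^ k) ?y = (loc \<phi> n ^^ (k + j)) x"
    by (simp add: funpow_add)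
  have "height \<phi> n ?y = height \<phi> n x - j"
    apply (rule thr_unique[of "\<lambda>k. (loc \<phi> n ^^ k) ?y = 0"])
     apply (rule height_char(3)[OF assms(1,2) yin])
    using height_char(3)[OF assms(1-3)] it assms(4) by auto
  then show ?thesis using yin by simp
qed

lemma sum_p:
  assumes "\<forall>x\<ge>1. \<phi> x \<noteq> x" "no_cycle \<phi> n"
  shows "(\<Sum>\<nu>=1..k. card {x \<in> {1..n}. height \<phi> n x = \<nu>}) = card {x \<in> {1..n}. height \<phi> n x \<le> k}"
proof (induction k)
  case 0
  have "{x \<in> {1..n}. height \<phi> n x \<le> 0} = {}"
    using height_char(1)[OF assms] by fastforce
  then show ?case by simp
next
  case (Suc k)
  have "{x \<in> {1..n}. height \<phi> n x \<le> Suc k} =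
     {x \<in> {1..n}. height \<phi> n x \<le> k} \<union> {x \<in> {1..n}. height \<phi> n x = Suc k}" by auto
  moreover have "card ({x \<in> {1..n}. height \<phi> n x \<le> k} \<union> {x \<in> {1..n}. height \<phi> n x = Suc k})
      = card {x \<in> {1..n}. height \<phi> n x \<le> k} + card {x \<in> {1..n}. height \<phi> n x = Suc k}"
    by (rule card_Un_disjoint) auto
  ultimately show ?case using Suc by simp
qed

theorem proposition2p5:
  fixes \<phi> :: "nat \<Rightarrow> nat" and k n :: nat
  assumes "\<phi> 0 = 0" and "\<forall>x\<ge>1. \<phi> x \<noteq> x"
    and "k \<ge> 1" and "n \<ge> 1"
    and "no_cycle \<phi> n"
  defines "p \<equiv> \<lambda>\<nu>. card {x \<in> {1..n}. height \<phi> n x = \<nu>}"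
  defines "m \<equiv> Max {\<nu> \<in> {1..n}. p \<nu> \<ge> 1}"
  defines "\<pi> \<equiv> map p [1..<m+1]"
  shows "is_composition n \<pi> \<and> length \<pi> = m \<and> 1 \<le> m \<and> m \<le> n
         \<and> (\<forall>\<nu>\<in>{1..m}. p \<nu> \<ge> 1)
         \<and> (k \<le> m \<longrightarrow> card (J \<phi> n k) = n - (\<Sum>\<nu>=1..k. p \<nu>))
         \<and> (k \<ge> m \<longrightarrow> card (J \<phi> n k) = 0)"
proof -
  note A = assms(2) assms(5)
  let ?S = "{\<nu> \<in> {1..n}. p \<nu> \<ge> 1}"
  have pin: "\<And>x. x \<in> {1..n} \<Longrightarrow> height \<phi> n x \<in> ?S"
  proof -
    fix x assume x: "x \<in> {1..n}"
    have "x \<in> {y \<in> {1..n}. height \<phi> n y = height \<phi> n x}" using x by simp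
    moreover have "finite {y \<in> {1..n}. height \<phi> n y = height \<phi> n x}" by simp
    ultimately have "card {y \<in> {1..n}. height \<phi> n y = height \<phi> n x} > 0"
      using card_gt_0_iff by blast
    then have "p (height \<phi> n x) \<ge> 1" unfolding p_def by simp
    then show "height \<phi> n x \<in> ?S" using height_char(1,2)[OF A x] by auto
  qed
  have Sne: "?S \<noteq> {}" using pin[of 1] assms(4) by auto
  have Sfin: "finite ?S" by simp
  have mS: "m \<in> ?S" unfolding m_def using Max_in[OF Sfin Sne] .
  have m1: "1 \<le> m" and mn: "m \<le> n" using mS by auto
  have hm: "\<And>x. x \<in> {1..n} \<Longrightarrow> height \<phi> n x \<le> m"
    unfolding m_def using pin Sfin Max_ge by blast
  have pos: "\<forall>\<nu>\<in>{1..m}. p \<nu> \<ge> 1"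
  proof
    fix \<nu> assume nu: "\<nu> \<in> {1..m}"
    have "p m \<ge> 1" using mS by simp
    then have "{x \<in> {1..n}. height \<phi> n x = m} \<noteq> {}" unfolding p_def by (metis card.empty not_one_le_zero)
    then obtain x where x: "x \<in> {1..n}" "height \<phi> n x = m" by blast
    have "m - \<nu> < height \<phi> n x" using x nu by auto
    from height_iter[OF A x(1) this] x nu
    have "(loc \<phi> n ^^ (m - \<nu>)) x \<in> {1..n}" "height \<phi> n ((loc \<phi> n ^^ (m - \<nu>)) x) = \<nu>" by auto
    then have "height \<phi> n ((loc \<phi> n ^^ (m - \<nu>)) x) \<in> ?S" by (intro pin)
    then show "p \<nu> \<ge> 1" using \<open>height \<phi> n ((loc \<phi> n ^^ (m - \<nu>)) x) = \<nu>\<close> by simp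
  qed
  have all: "{x \<in> {1..n}. height \<phi> n x \<le> m} = {1..n}" using hm by auto
  have sumall: "(\<Sum>\<nu>=1..m. p \<nu>) = n"
    unfolding p_def using sum_p[OF A, of m] all by simp
  have Jeq: "J \<phi> n k = {1..n} - {x \<in> {1..n}. height \<phi> n x \<le> k}"
  proof -
    have "\<And>x. x \<in> {1..n} \<Longrightarrow> (loc \<phi> n ^^ k) x \<in> {1..n} \<longleftrightarrow> \<not> height \<phi> n x \<le> k"
    proof -
      fix x assume x: "x \<in> {1..n}"
      show "(loc \<phi> n ^^ k) x \<in> {1..n} \<longleftrightarrow> \<not> height \<phi> n x \<le> k"
        using height_char(3)[OF A x, of k] funpow_loc_le[OF assms(3), of \<phi> n x] by auto
    qed
    then show ?thesis unfolding J_def by blast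
  qed
  have cardJ: "card (J \<phi> n k) = n - (\<Sum>\<nu>=1..k. p \<nu>)"
    unfolding Jeq p_def sum_p[OF A]
    by (subst card_Diff_subset) auto
  have compo: "is_composition n \<pi>"
    unfolding is_composition_def \<pi>_def
  proof
    show "\<forall>q\<in>set (map p [1..<m + 1]). 1 \<le> q" using pos by auto
    have "sum_list (map p [1..<m + 1]) = sum p {1..<m+1}"
      by (metis set_upt sum_set_upt_conv_sum_list_nat)
    also have "{1..<m+1} = {1..m}" by auto
    finally show "sum_list (map p [1..<m + 1]) = n" using sumall by simp
  qed
  have kbig: "k \<ge> m \<longrightarrow> card (J \<phi> n k) = 0"
  proof
    assume "k \<ge> m"
    then have "{x \<in> {1..n}. height \<phi> n x \<le> k} = {1..n}" using hm by fastforce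
    then show "card (J \<phi> n k) = 0" unfolding Jeq by simp
  qed
  show ?thesis using compo pos m1 mn cardJ kbig unfolding \<pi>_def by simp
qed

end
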